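(* Let $d,\ell,r,s\in\mathbb{N}$ with $d\ge\ell$, let $T\subseteq\mathbb{F}$ be a subset of size $n$, and let $r=s-\lfloor\frac{d-\ell}{n}\rfloor$. Let $Q,R\in\mathbb{F}[x]$ be univariate polynomials of degree at most $\ell$, and let $g\colon T\to\mathbb{F}_{<r}[z]$ and $w\colon T\times[r]\to\mathbb{Z}_{\ge0}$ be functions such that $w(a,i)\le\frac n2\big((s-i)-\frac{d-\ell}{n}\big)$ for every $(a,i)\in T\times[r]$. If $Q\ne R$, then \[\Gamma^{s,d,\ell}_w(g,Q)+\Gamma^{s,d,\ell}_w(g,R)\ge n^2\Big(s-\frac dn\Big).\]
   Context: $\mathbb{F}$ is a field, $[r]=\{0,1,\dots,r-1\}$, and $\mathbb{F}_{<r}[z]$ denotes polynomials of degree $<r$. For a polynomial $R$ of degree at most $\ell$, for $i\in[r+1]$ let $A_i(g,R)=\{a\in T:\max\{j\in[r+1]: g(a)\equiv R(a+z)\bmod\langle z\rangle^j\}=i\}$. Define \[\Gamma^{s,d,\ell}_w(g,R)=\sum_{i=0}^{r-1}\sum_{a\in A_i(g,R)}\max\Big\{n\Big((s-i)-\tfrac{d-\ell}{n}\Big)-w(a,i),\ \max_{j<i}w(a,j)\Big\}+\sum_{a\in A_r(g,R)}\max_{j<r}w(a,j),\] where a maximum over an empty index set is ignored (taken as $0$). *)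

theory Defs
  imports "HOL-Computational_Algebra.Polynomial"
begin

text \<open>Maximal j in [r+1] = {0..r} with g(a) = R(a+z) mod <z>^j.
  R(a+z) is the composition of R with the polynomial a + z.\<close>
definition agree_level :: "('a::field \<Rightarrow> 'a poly) \<Rightarrow> 'a poly \<Rightarrow> nat \<Rightarrow> 'a \<Rightarrow> nat" where
  "agree_level g R r a =
     Max {j. j \<le> r \<and> monom 1 j dvd (g a - pcompose R [:a, 1:])}"

definition A_set :: "'a set \<Rightarrow> ('a::field \<Rightarrow> 'a poly) \<Rightarrow> 'a poly \<Rightarrow> nat \<Rightarrow> nat \<Rightarrow> 'a set" where
  "A_set T g R r i = {a \<in> T. agree_level g R r a = i}"

definition max_w_below :: "('a \<Rightarrow> nat \<Rightarrow> nat) \<Rightarrow> 'a \<Rightarrow> nat \<Rightarrow> nat" where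
  "max_w_below w a i = (if i = 0 then 0 else Max {w a j | j. j < i})"

definition Gamma :: "'a set \<Rightarrow> nat \<Rightarrow> nat \<Rightarrow> nat \<Rightarrow> nat \<Rightarrow> ('a \<Rightarrow> nat \<Rightarrow> nat)
    \<Rightarrow> ('a::field \<Rightarrow> 'a poly) \<Rightarrow> 'a poly \<Rightarrow> real" where
  "Gamma T r s d l w g R =
    (let n = real (card T) in
     (\<Sum>i<r. \<Sum>a\<in>A_set T g R r i.
        max (n * ((real s - real i) - (real d - real l) / n) - real (w a i))
            (real (max_w_below w a i)))
     + (\<Sum>a\<in>A_set T g R r r. real (max_w_below w a r)))"

end

theory Submission
  imports Defs
begin


lemma pcomp_monom: "pcompose (monom (1::'a::field) m) [:-a,1:] = [:-a,1:]^m"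
proof (induction m)
  case 0 then show ?case by (simp add: monom_altdef pcompose_1)
next
  case (Suc m)
  have "monom (1::'a) (Suc m) = [:0,1:] * monom 1 m" by (simp add: monom_altdef)
  then show ?case using Suc by (simp add: pcompose_mult pcompose_pCons)
qed

lemma shift_dvd:
  fixes P :: "'a::field poly"
  assumes "monom 1 m dvd pcompose P [:a,1:]"
  shows "[:-a,1:]^m dvd P"
proof -
  from assms obtain k where k: "pcompose P [:a,1:] = monom 1 m * k" by (auto elim: dvdE)
  have "pcompose [:a,1:] [:-a,(1::'a):] = [:0,1:]" by (simp add: pcompose_pCons)
  hence "P = pcompose (pcompose P [:a,1:]) [:-a,1:]" by (simp add: pcompose_assoc[symmetric])
  also have "\<dots> = [:-a,1:]^m * pcompose k [:-a,1:]" by (simp add: k pcompose_mult pcomp_monom)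
  finally show ?thesis by (metis dvd_triv_left)
qed

lemma sum_le_deg:
  fixes p :: "'a::field poly"
  assumes "p \<noteq> 0" "finite T" "\<And>a. a \<in> T \<Longrightarrow> [:-a,1:]^(m a) dvd p"
  shows "(\<Sum>a\<in>T. m a) \<le> degree p"
proof -
  have le: "m a \<le> order a p" if "a \<in> T" for a
    using dvd_imp_order_le[OF assms(1) assms(3)[OF that], of a] by (simp add: order_power_n_n)
  have fin: "finite {x. poly p x = 0}" using assms(1) poly_roots_finite by blast
  have "(\<Sum>a\<in>T. m a) = (\<Sum>a\<in>T \<inter> {x. poly p x = 0}. m a)"
  proof (rule sum.mono_neutral_right[OF assms(2)])
    show "\<forall>i\<in>T - T \<inter> {x. poly p x = 0}. m i = 0"
    proof
      fix i assume i: "i \<in> T - T \<inter> {x. poly p x = 0}"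
      hence "order i p = 0" using assms(1) by (auto simp: order_root)
      thus "m i = 0" using le[of i] i by simp
    qed
  qed auto
  also have "\<dots> \<le> (\<Sum>a\<in>T \<inter> {x. poly p x = 0}. order a p)" by (rule sum_mono) (auto intro: le)
  also have "\<dots> \<le> (\<Sum>a\<in>{x. poly p x = 0}. order a p)" by (rule sum_mono2[OF fin]) auto
  also have "\<dots> \<le> degree p" by (rule sum_order_le_degree[OF assms(1)])
  finally show ?thesis .
qed

lemma level_props:
  fixes g :: "'a::field \<Rightarrow> 'a poly"
  shows "agree_level g R r a \<le> r \<and> monom 1 (agree_level g R r a) dvd (g a - pcompose R [:a, 1:])"
proof -
  let ?S = "{j. j \<le> r \<and> monom 1 j dvd (g a - pcompose R [:a, 1:])}"
  have f: "finite ?S" by (rule finite_subset[of _ "{..r}"]) auto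
  have "0 \<in> ?S" by (simp add: monom_altdef)
  hence "Max ?S \<in> ?S" using f Max_in by blast
  thus ?thesis unfolding agree_level_def by simp
qed

lemma mwb: "j < i \<Longrightarrow> w a j \<le> max_w_below w a i"
  unfolding max_w_below_def
  by (auto intro!: Max_ge simp: setcompr_eq_image)


lemma pair:
  fixes i j r :: nat and X M :: "nat \<Rightarrow> real" and wa :: "nat \<Rightarrow> nat"
  assumes "i \<le> r" "j \<le> r" "\<And>k. k < r \<Longrightarrow> 2 * real (wa k) \<le> X k" "X r \<le> 0"
    "\<And>k k'. k < k' \<Longrightarrow> real (wa k) \<le> M k'" "\<And>k. M k \<ge> 0"
  shows "(if i < r then max (X i - real (wa i)) (M i) else M r)
       + (if j < r then max (X j - real (wa j)) (M j) else M r) \<ge> X (min i j)"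
proof -
  have A: "i < j \<Longrightarrow> (if j < r then max (X j - real (wa j)) (M j) else M r) \<ge> real (wa i)"
    using assms(2,5) by (cases "j < r") (auto simp: max_def, fastforce+)
  have B: "j < i \<Longrightarrow> (if i < r then max (X i - real (wa i)) (M i) else M r) \<ge> real (wa j)"
    using assms(1,5) by (cases "i < r") (auto simp: max_def, fastforce+)
  show ?thesis
  proof (cases "i < j")
    case True
    then show ?thesis using A[OF True] assms(2) by (auto simp: max_def)
  next
    case False
    show ?thesis
    proof (cases "j < i")
      case True
      then show ?thesis using B[OF True] assms(1) by (auto simp: max_def)
    next
      case False
      with \<open>\<not> i < j\<close> have ij: "i = j" by simp
      show ?thesis
      proof (cases "i < r")
        case True
        then show ?thesis using ij assms(3)[OF True] by (auto simp: max_def)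
      next
        case False
        then show ?thesis using ij assms(1,4) assms(6)[of r] by auto
      qed
    qed
  qed
qed


lemma Gamma_alt:
  assumes "finite T"
  shows "Gamma T r s d l w g R = (\<Sum>a\<in>T. (let i = agree_level g R r a in
     if i < r then max (real (card T) * ((real s - real i) - (real d - real l) / real (card T)) - real (w a i))
            (real (max_w_below w a i)) else real (max_w_below w a r)))"
proof -
  define F where "F a = (let i = agree_level g R r a in
     if i < r then max (real (card T) * ((real s - real i) - (real d - real l) / real (card T)) - real (w a i))
            (real (max_w_below w a i)) else real (max_w_below w a r))" for a
  have "(\<Sum>a\<in>T. F a) = (\<Sum>i\<in>{..r}. \<Sum>a\<in>{x \<in> T. agree_level g R r x = i}. F a)"
    by (rule sum.group[symmetric]) (use assms level_props in auto)
  also have "\<dots> = (\<Sum>i\<in>insert r {..<r}. \<Sum>a\<in>A_set T g R r i. F a)"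
    unfolding A_set_def by (simp add: atMost_Suc lessThan_Suc_atMost[symmetric])
  also have "\<dots> = (\<Sum>a\<in>A_set T g R r r. F a) + (\<Sum>i<r. \<Sum>a\<in>A_set T g R r i. F a)"
    by (simp add: sum.insert)
  also have "\<dots> = Gamma T r s d l w g R"
    unfolding Gamma_def Let_def
    by (simp add: F_def A_set_def Let_def)
  finally show ?thesis unfolding F_def by simp
qed




lemma half_le: "(x::real) \<le> a / 2 * y \<Longrightarrow> 2 * x \<le> a * y"
  by simp

lemma monom_dvd_le: "k \<le> k' \<Longrightarrow> monom (1::'a::field) k dvd monom 1 k'"
  by (simp add: monom_altdef le_imp_power_dvd)
theorem lemma6p2:
  fixes T :: "'a::field set" and d l r s n :: nat
    and Q R :: "'a poly" and g :: "'a \<Rightarrow> 'a poly" and w :: "'a \<Rightarrow> nat \<Rightarrow> nat"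
  assumes "d \<ge> l"
    and "finite T" and "card T = n"
    and "int r = int s - \<lfloor>(real d - real l) / real n\<rfloor>"
    and "degree Q \<le> l" and "degree R \<le> l"
    and "\<forall>a\<in>T. g a = 0 \<or> degree (g a) < r"
    and "\<forall>a\<in>T. \<forall>i<r. real (w a i) \<le> real n / 2 * ((real s - real i) - (real d - real l) / real n)"
    and "Q \<noteq> R"
  shows "Gamma T r s d l w g Q + Gamma T r s d l w g R \<ge> real n ^ 2 * (real s - real d / real n)"
proof (cases "n = 0")
  case True
  then have "T = {}" using assms(2,3) by simp
  then show ?thesis using True by (simp add: Gamma_def A_set_def)
next
  case False
  hence npos: "real n > 0" by simp
  define X where "X k = real n * ((real s - real k) - (real d - real l) / real n)" for k :: nat
  define lv where "lv P a = agree_level g P r a" for P a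
  define F where "F P a = (if lv P a < r then max (X (lv P a) - real (w a (lv P a)))
            (real (max_w_below w a (lv P a))) else real (max_w_below w a r))" for P a
  have G: "Gamma T r s d l w g P = (\<Sum>a\<in>T. F P a)" for P
    unfolding Gamma_alt[OF assms(2)] F_def X_def lv_def Let_def assms(3) ..
  define m where "m a = min (lv Q a) (lv R a)" for a
  have Xr: "X r \<le> 0"
  proof -
    have "real s - real r = of_int \<lfloor>(real d - real l) / real n\<rfloor>"
    proof -
      have "real_of_int (int r) = real_of_int (int s - \<lfloor>(real d - real l) / real n\<rfloor>)"
        by (simp only: assms(4))
      thus ?thesis by simp
    qed
    also have "\<dots> \<le> (real d - real l) / real n" by (rule of_int_floor_le)
    finally show ?thesis unfolding X_def using npos by (intro mult_nonneg_nonpos) auto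
  qed
  have per: "F Q a + F R a \<ge> X (m a)" if a: "a \<in> T" for a
    unfolding F_def m_def
  proof (rule pair)
    show "lv Q a \<le> r" "lv R a \<le> r" unfolding lv_def using level_props by blast+
    show "2 * real (w a k) \<le> X k" if "k < r" for k
    proof -
      have "real (w a k) \<le> real n / 2 * ((real s - real k) - (real d - real l) / real n)"
        using assms(8) a that by blast
      thus ?thesis unfolding X_def by (rule half_le)
    qed
    show "X r \<le> 0" by (rule Xr)
    show "real (w a k) \<le> real (max_w_below w a k')" if "k < k'" for k k'
      using mwb[OF that] by simp
  qed simp
  have dv: "[:-a,1:]^(m a) dvd (R - Q)" if "a \<in> T" for a
  proof (rule shift_dvd)
    have d1: "monom 1 (m a) dvd (g a - pcompose Q [:a,1:])"
      using level_props[of g Q r a] unfolding m_def lv_def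
      by (meson dvd_trans monom_dvd_le min.cobounded1)
    have d2: "monom 1 (m a) dvd (g a - pcompose R [:a,1:])"
      using level_props[of g R r a] unfolding m_def lv_def
      by (meson dvd_trans monom_dvd_le min.cobounded2)
    have "monom 1 (m a) dvd (g a - pcompose Q [:a,1:]) - (g a - pcompose R [:a,1:])"
      using d1 d2 by (rule dvd_diff)
    thus "monom 1 (m a) dvd pcompose (R - Q) [:a,1:]" by (simp add: pcompose_diff)
  qed
  have RQ: "R - Q \<noteq> 0" using assms(9) by simp
  have summ: "(\<Sum>a\<in>T. m a) \<le> l"
    using sum_le_deg[OF RQ assms(2) dv] degree_diff_le[OF assms(6,5)] by linarith
  have "(\<Sum>a\<in>T. X (m a)) = (\<Sum>a\<in>T. (real n * real s - (real d - real l)) - real n * real (m a))"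
    unfolding X_def using npos by (intro sum.cong) (auto simp: field_simps)
  also have "\<dots> = real n * (real n * real s - (real d - real l)) - real n * real (\<Sum>a\<in>T. m a)"
    using assms(3) by (simp add: sum_subtractf sum_distrib_left)
  also have "\<dots> \<ge> real n * (real n * real s - (real d - real l)) - real n * real l"
    using summ npos by (simp add: mult_left_mono del: of_nat_sum)
  finally have fin: "(\<Sum>a\<in>T. X (m a)) \<ge> real n * (real n * real s - (real d - real l)) - real n * real l" .
  have "real n ^ 2 * (real s - real d / real n) = real n * (real n * real s - (real d - real l)) - real n * real l"
    using npos by (simp add: field_simps power2_eq_square)
  hence "(\<Sum>a\<in>T. X (m a)) \<ge> real n ^ 2 * (real s - real d / real n)" using fin by linarith
  also have "(\<Sum>a\<in>T. X (m a)) \<le> (\<Sum>a\<in>T. F Q a + F R a)" by (rule sum_mono) (rule per)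
  finally show ?thesis unfolding G sum.distrib .
qed

end
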